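(* Let $X$ be a path-connected $A$-space which contains a countable subset $Y$ whose open hull is $X$. Then for any starting points $m,l\in X$ the lion has a strategy in $X$ for the starting points $m$ (man) and $l$ (lion). In particular, in any path-connected finite topological space the lion has a strategy for any starting points.
   Context: An $A$-space is a topological space in which arbitrary intersections of open sets are open. In an $A$-space, the open hull of a subset $Y$ is the intersection of all open sets containing $Y$. For a topological space $X$ and $x\in X$, let $P_x(X)$ be the set of continuous maps $\gamma:[0,+\infty)\to X$ with $\gamma(0)=x$. For $\gamma\in P_x(X)$ and $t\ge 0$, write $\gamma_{<t}=\gamma|_{[0,t)}$ and $\gamma_{\le t}=\gamma|_{[0,t]}$. Given starting points $m$ (man) and $l$ (lion) in $X$, a strategy for the lion is a function $S:P_m(X)\to P_l(X)$ such that (i) for each $\alpha\in P_m(X)$ there exists $t\ge 0$ with $S(\alpha)(t)=\alpha(t)$; and (ii) (no-lookahead rule) whenever $\alpha,\alpha'\in P_m(X)$ and $t\ge0$ satisfy $\alpha_{<t}=\alpha'_{<t}$, then $S(\alpha)_{\le t}=S(\alpha')_{\le t}$. The Axiom of Choice is assumed. *)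

theory Defs
  imports "HOL-Analysis.Analysis"
begin

definition A_space :: "'a topology \<Rightarrow> bool" where
  "A_space X \<longleftrightarrow> (\<forall>F. F \<noteq> {} \<and> (\<forall>U\<in>F. openin X U) \<longrightarrow> openin X (\<Inter>F))"

definition open_hull :: "'a topology \<Rightarrow> 'a set \<Rightarrow> 'a set" where
  "open_hull X Y = \<Inter>{U. openin X U \<and> Y \<subseteq> U}"

text \<open>P_x(X): continuous maps [0,+inf) -> X starting at x (values outside [0,+inf) irrelevant).\<close>
definition paths_from :: "'a topology \<Rightarrow> 'a \<Rightarrow> (real \<Rightarrow> 'a) set" where
  "paths_from X x = {\<gamma>. continuous_map (subtopology euclideanreal {0..}) X \<gamma> \<and> \<gamma> 0 = x}"

definition lion_strategy ::
  "'a topology \<Rightarrow> 'a \<Rightarrow> 'a \<Rightarrow> ((real \<Rightarrow> 'a) \<Rightarrow> (real \<Rightarrow> 'a)) \<Rightarrow> bool" where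
  "lion_strategy X m l S \<longleftrightarrow>
     (\<forall>\<alpha>\<in>paths_from X m. S \<alpha> \<in> paths_from X l) \<and>
     (\<forall>\<alpha>\<in>paths_from X m. \<exists>t\<ge>0. S \<alpha> t = \<alpha> t) \<and>
     (\<forall>\<alpha>\<in>paths_from X m. \<forall>\<alpha>'\<in>paths_from X m. \<forall>t\<ge>0.
        (\<forall>s. 0 \<le> s \<and> s < t \<longrightarrow> \<alpha> s = \<alpha>' s) \<longrightarrow>
        (\<forall>s. 0 \<le> s \<and> s \<le> t \<longrightarrow> S \<alpha> s = S \<alpha>' s))"

end

theory Submission imports Defs begin

lemma jump_cont:
  assumes tau: "continuous_map euclideanreal X \<tau>"
    and rho: "continuous_map (subtopology euclideanreal {0..}) X \<rho>"
    and up: "\<And>V. openin X V \<Longrightarrow> \<tau> T \<in> V \<Longrightarrow> \<rho> T \<in> V"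
    and T: "T \<ge> 0"
  shows "continuous_map (subtopology euclideanreal {0..}) X (\<lambda>t. if t \<le> T then \<tau> t else \<rho> t)"
  unfolding continuous_map_def
proof (intro conjI allI impI)
  show "(\<lambda>t. if t \<le> T then \<tau> t else \<rho> t) \<in> topspace (subtopology euclideanreal {0..}) \<rightarrow> topspace X"
    using continuous_map_funspace[OF tau] continuous_map_funspace[OF rho] by (auto simp: Pi_iff)
next
  fix V assume V: "openin X V"
  have "openin euclideanreal {x \<in> topspace euclideanreal. \<tau> x \<in> V}"
    using tau V unfolding continuous_map_def by blast
  then obtain A where A: "open A" "{x. \<tau> x \<in> V} = A" by simp
  have "openin (subtopology euclideanreal {0..}) {x \<in> topspace (subtopology euclideanreal {0..}). \<rho> x \<in> V}"
    using rho V unfolding continuous_map_def by blast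
  then have "openin (subtopology euclideanreal {0..}) {x \<in> {0..}. \<rho> x \<in> V}" by simp
  then obtain B where B: "open B" "{x \<in> {0..}. \<rho> x \<in> V} = B \<inter> {0..}"
    by (auto simp: openin_subtopology)
  have hA: "x \<in> A \<longleftrightarrow> \<tau> x \<in> V" for x using A(2) by blast
  have hB: "x \<in> B \<longleftrightarrow> \<rho> x \<in> V" if "x \<ge> 0" for x using B(2) that by blast
  have tsp: "topspace (subtopology euclideanreal {0..}) = {0::real..}" by simp
  show "openin (subtopology euclideanreal {0..})
          {x \<in> topspace (subtopology euclideanreal {0..}). (if x \<le> T then \<tau> x else \<rho> x) \<in> V}"
  proof (cases "\<tau> T \<in> V")
    case True
    have "\<rho> T \<in> V" using up[OF V True] .
    have eq: "{x \<in> topspace (subtopology euclideanreal {0..}). (if x \<le> T then \<tau> x else \<rho> x) \<in> V}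
       = ((A \<inter> {..<T}) \<union> (A \<inter> B) \<union> (B \<inter> {T<..})) \<inter> {0..}" (is "?L = ?R")
    proof (rule set_eqI)
      fix x
      show "x \<in> ?L \<longleftrightarrow> x \<in> ?R"
      proof (cases "x \<ge> 0")
        case False then show ?thesis by simp
      next
        case x0: True
        show ?thesis
        proof (cases "x < T")
          case True then show ?thesis using x0 hA hB[OF x0] by auto
        next
          case nlt: False
          show ?thesis
          proof (cases "x = T")
            case True then show ?thesis using x0 hA hB[OF x0] \<open>\<tau> T \<in> V\<close> \<open>\<rho> T \<in> V\<close> by auto
          next
            case False then have "x > T" using nlt by simp
            then show ?thesis using x0 hA hB[OF x0] by auto
          qed
        qed
      qed
    qed
    have o: "open ((A \<inter> {..<T}) \<union> (A \<inter> B) \<union> (B \<inter> {T<..}))" using A(1) B(1) by (intro open_Un open_Int) auto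
    show ?thesis unfolding eq openin_subtopology using o by (intro exI[of _ "(A \<inter> {..<T}) \<union> (A \<inter> B) \<union> (B \<inter> {T<..})"] conjI) simp_all
  next
    case False
    have eq: "{x \<in> topspace (subtopology euclideanreal {0..}). (if x \<le> T then \<tau> x else \<rho> x) \<in> V}
       = ((A \<inter> {..<T}) \<union> (B \<inter> {T<..})) \<inter> {0..}" (is "?L = ?R")
    proof (rule set_eqI)
      fix x
      show "x \<in> ?L \<longleftrightarrow> x \<in> ?R"
      proof (cases "x \<ge> 0")
        case False then show ?thesis by simp
      next
        case x0: True
        show ?thesis
        proof (cases "x < T")
          case True then show ?thesis using x0 hA hB[OF x0] by auto
        next
          case nlt: False
          show ?thesis
          proof (cases "x = T")
            case True then show ?thesis using x0 hA \<open>\<tau> T \<notin> V\<close> by auto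
          next
            case False then have "x > T" using nlt by simp
            then show ?thesis using x0 hA hB[OF x0] by auto
          qed
        qed
      qed
    qed
    have o: "open ((A \<inter> {..<T}) \<union> (B \<inter> {T<..}))" using A(1) B(1) by (intro open_Un open_Int) auto
    show ?thesis unfolding eq openin_subtopology using o by (intro exI[of _ "(A \<inter> {..<T}) \<union> (B \<inter> {T<..})"] conjI) simp_all
  qed
qed

lemma path_local:
  assumes "continuous_map (subtopology euclideanreal {0..}) X \<alpha>" "openin X U" "\<alpha> t \<in> U" "t \<ge> 0"
  shows "\<exists>d>0. \<forall>s\<ge>0. \<bar>s - t\<bar> < d \<longrightarrow> \<alpha> s \<in> U"
proof -
  have "openin (subtopology euclideanreal {0..}) {x \<in> topspace (subtopology euclideanreal {0..}). \<alpha> x \<in> U}"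
    using assms(1,2) unfolding continuous_map_def by blast
  then have "openin (subtopology euclideanreal {0..}) {x \<in> {0..}. \<alpha> x \<in> U}" by simp
  then obtain B where B: "open B" "{x \<in> {0..}. \<alpha> x \<in> U} = B \<inter> {0..}"
    by (auto simp: openin_subtopology)
  have "t \<in> B" using B assms by auto
  then obtain d where d: "d > 0" "ball t d \<subseteq> B" using B(1) openE by blast
  show ?thesis
  proof (intro exI[of _ d] conjI allI impI)
    fix s :: real assume "s \<ge> 0" "\<bar>s - t\<bar> < d"
    then have "s \<in> B \<inter> {0..}" using d by (auto simp: dist_real_def)
    then show "\<alpha> s \<in> U" using B by blast
  qed (use d in auto)
qed

lemma OH_open: "A_space X \<Longrightarrow> y \<in> topspace X \<Longrightarrow> openin X (open_hull X {y})"
  unfolding A_space_def open_hull_def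
  by (erule allE[of _ "{U. openin X U \<and> {y} \<subseteq> U}"]) auto

lemma OH_mem: "x \<in> open_hull X {y} \<Longrightarrow> openin X V \<Longrightarrow> y \<in> V \<Longrightarrow> x \<in> V"
  unfolding open_hull_def by auto

lemma OH_exists:
  assumes "x \<in> open_hull X Y" shows "\<exists>y\<in>Y. x \<in> open_hull X {y}"
proof (rule ccontr)
  assume neg: "\<not> ?thesis"
  define V where "V = \<Union>{U. openin X U \<and> x \<notin> U}"
  have "openin X V" unfolding V_def by auto
  moreover have "Y \<subseteq> V"
  proof
    fix y assume "y \<in> Y"
    then have "x \<notin> open_hull X {y}" using neg by auto
    then obtain U where "openin X U" "y \<in> U" "x \<notin> U" unfolding open_hull_def by auto
    then show "y \<in> V" unfolding V_def by auto
  qed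
  ultimately have "x \<in> V" using assms unfolding open_hull_def by auto
  then show False unfolding V_def by auto
qed

lemma main_lemma:
  assumes pc: "path_connected_space X" and As: "A_space X"
    and cY: "countable Y" and YX: "Y \<subseteq> topspace X"
    and OHY: "open_hull X Y = topspace X"
    and m: "m \<in> topspace X" and l: "l \<in> topspace X"
  shows "\<exists>S. lion_strategy X m l S"
proof -
  have Yne: "Y \<noteq> {}"
  proof
    assume "Y = {}"
    then have "open_hull X Y \<subseteq> {}" unfolding open_hull_def by auto
    then show False using OHY m by auto
  qed
  define w where "w k = (case k of 0 \<Rightarrow> l | Suc j \<Rightarrow> from_nat_into Y (fst (prod_decode j)))" for k
  have w: "w k \<in> topspace X" for k
    using l YX from_nat_into[OF Yne] by (cases k) (auto simp: w_def)
  define T where "T k = real k / real (Suc k)" for k :: nat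
  have T0: "T 0 = 0" by (simp add: T_def)
  have Tge: "T k \<ge> 0" for k by (simp add: T_def)
  have Tform: "T k = 1 - 1 / real (Suc k)" for k
    by (simp add: T_def field_simps)
  have Tmono: "j \<le> k \<Longrightarrow> T j \<le> T k" for j k
    unfolding Tform by (simp add: frac_le)
  have Tdiff: "(T (Suc k) - T k) * (real (Suc k) * real (Suc (Suc k))) = 1" for k
  proof -
    have "T (Suc k) - T k = 1 / real (Suc k) - 1 / real (Suc (Suc k))" by (simp add: Tform)
    also have "\<dots> = 1 / (real (Suc k) * real (Suc (Suc k)))"
      by (simp add: divide_simps)
    finally show ?thesis by simp
  qed
  have "\<forall>k. \<exists>g. pathin X g \<and> g 0 = w k \<and> g 1 = w (Suc k)"
    using pc w unfolding path_connected_space_def by blast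
  then obtain P where P: "\<And>k. pathin X (P k) \<and> P k 0 = w k \<and> P k 1 = w (Suc k)"
    by metis
  define c where "c k t = max 0 (min 1 ((t - T k) * (real (Suc k) * real (Suc (Suc k)))))" for k t
  define piece where "piece k t = P k (c k t)" for k t
  have c_cont: "continuous_map euclideanreal (top_of_set {0..1}) (c k)" for k
  proof (rule continuous_map_into_subtopology)
    show "continuous_map euclideanreal euclideanreal (c k)"
      unfolding c_def continuous_map_iff_continuous2 by (intro continuous_intros)
    show "c k \<in> topspace euclideanreal \<rightarrow> {0..1}" unfolding c_def by auto
  qed
  have piece_cont: "continuous_map euclideanreal X (piece k)" for k
  proof -
    have "continuous_map euclideanreal X (P k \<circ> c k)"
      using continuous_map_compose[OF c_cont] P unfolding pathin_def by blast
    then show ?thesis unfolding piece_def o_def by (simp add: comp_def)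
  qed
  have piece_L: "piece k (T k) = w k" for k
    using P[of k] by (simp add: piece_def c_def)
  have piece_R: "piece k (T (Suc k)) = w (Suc k)" for k
    using P[of k] Tdiff[of k] by (simp add: piece_def c_def)
  define tau where "tau = rec_nat (piece 0) (\<lambda>k f t. if t \<le> T (Suc k) then f t else piece (Suc k) t)"
  have tau0: "tau 0 = piece 0" by (simp add: tau_def)
  have tauS: "tau (Suc k) = (\<lambda>t. if t \<le> T (Suc k) then tau k t else piece (Suc k) t)" for k
    unfolding tau_def by simp
  have tau_ge: "T k \<le> t \<Longrightarrow> tau k t = piece k t" for k t
  proof (induction k arbitrary: t)
    case 0 then show ?case by (simp add: tau0)
  next
    case (Suc k)
    show ?case
    proof (cases "t \<le> T (Suc k)")
      case True
      then have "t = T (Suc k)" using Suc.prems by auto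
      moreover have "T k \<le> T (Suc k)" by (rule Tmono) simp
      ultimately show ?thesis using Suc.IH[of t] piece_L piece_R by (simp add: tauS)
    qed (simp add: tauS)
  qed
  have tau_cont: "continuous_map euclideanreal X (tau k)" for k
  proof (induction k)
    case 0 then show ?case by (simp add: tau0 piece_cont)
  next
    case (Suc k)
    have "continuous_map euclideanreal X (\<lambda>t. if (\<lambda>t. t) t \<le> (\<lambda>_. T (Suc k)) t then tau k t else piece (Suc k) t)"
    proof (rule continuous_map_cases_le)
      show "continuous_map euclideanreal euclideanreal (\<lambda>t. t)" by simp
      show "continuous_map euclideanreal euclideanreal (\<lambda>_. T (Suc k))" by simp
      show "continuous_map (subtopology euclideanreal {x \<in> topspace euclideanreal. x \<le> T (Suc k)}) X (tau k)"
        using Suc.IH by (rule continuous_map_from_subtopology)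
      show "continuous_map (subtopology euclideanreal {x \<in> topspace euclideanreal. T (Suc k) \<le> x}) X (piece (Suc k))"
        using piece_cont by (rule continuous_map_from_subtopology)
      fix x assume "x = T (Suc k)"
      moreover have "T k \<le> T (Suc k)" by (rule Tmono) simp
      ultimately show "tau k x = piece (Suc k) x" using tau_ge[of k x] piece_L piece_R by simp
    qed
    then show ?case by (simp add: tauS)
  qed
  have tau_agree: "j \<le> k \<Longrightarrow> t \<le> T j \<Longrightarrow> tau k t = tau j t" for j k t
  proof (induction k)
    case 0 then show ?case by simp
  next
    case (Suc k)
    show ?case
    proof (cases "j = Suc k")
      case False
      then have "j \<le> k" using Suc.prems by auto
      moreover have "T j \<le> T (Suc k)" using Suc.prems by (intro Tmono) auto
      ultimately show ?thesis using Suc by (simp add: tauS)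
    qed simp
  qed
  have tau_l: "tau k 0 = l" for k
  proof -
    have "tau k 0 = tau 0 0" using tau_agree[of 0 k 0] T0 by simp
    also have "\<dots> = l" using piece_L[of 0] T0 by (simp add: tau0 w_def)
    finally show ?thesis .
  qed
  have tau_T: "tau k (T k) = w k" for k using tau_ge[of k "T k"] piece_L by simp
  define hit where "hit \<alpha> k \<longleftrightarrow> \<alpha> (T k) \<in> open_hull X {w k}" for \<alpha> :: "real \<Rightarrow> 'a" and k
  have hitex: "\<exists>k. hit \<alpha> k" if \<alpha>: "\<alpha> \<in> paths_from X m" for \<alpha>
  proof -
    have ac: "continuous_map (subtopology euclideanreal {0..}) X \<alpha>" using \<alpha> by (simp add: paths_from_def)
    have "\<alpha> 1 \<in> topspace X" using continuous_map_funspace[OF ac] by (auto simp: Pi_iff)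
    then have "\<alpha> 1 \<in> open_hull X Y" using OHY by simp
    then obtain y where y: "y \<in> Y" "\<alpha> 1 \<in> open_hull X {y}" using OH_exists by metis
    obtain n where n: "from_nat_into Y n = y" using from_nat_into_surj[OF cY y(1)] by blast
    have yt: "y \<in> topspace X" using y YX by auto
    obtain d where d: "d > 0" "\<And>s. s \<ge> 0 \<Longrightarrow> \<bar>s - 1\<bar> < d \<Longrightarrow> \<alpha> s \<in> open_hull X {y}"
      using path_local[OF ac OH_open[OF As yt] y(2)] by auto
    obtain j :: nat where j: "1 / d < real j" using reals_Archimedean2 by blast
    define k where "k = Suc (prod_encode (n, j))"
    have wk: "w k = y" using n by (simp add: k_def w_def)
    have "real j \<le> real (prod_encode (n, j))" using le_prod_encode_2 by simp
    then have "1 / d < real (Suc k)" using j unfolding k_def by simp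
    then have "1 / real (Suc k) < d" using d(1)
      by (metis divide_less_eq mult.commute of_nat_0_less_iff zero_less_Suc)
    moreover have "1 / real (Suc k) > 0" by simp
    ultimately have "\<bar>T k - 1\<bar> < d" unfolding Tform by simp
    then have "\<alpha> (T k) \<in> open_hull X {y}" using d(2) Tge by blast
    then show ?thesis using wk unfolding hit_def by blast
  qed
  define k0 where "k0 \<alpha> = (LEAST k. hit \<alpha> k)" for \<alpha>
  have k0hit: "hit \<alpha> (k0 \<alpha>)" if "\<alpha> \<in> paths_from X m" for \<alpha>
    unfolding k0_def using hitex[OF that] by (rule LeastI_ex)
  define R where "R \<alpha> s0 = (SOME \<gamma>. \<gamma> \<in> paths_from X m \<and> (\<exists>s>s0. \<forall>u. 0 \<le> u \<and> u < s \<longrightarrow> \<gamma> u = \<alpha> u))"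
    for \<alpha> :: "real \<Rightarrow> 'a" and s0 :: real
  have R: "R \<alpha> s0 \<in> paths_from X m \<and> (\<exists>s>s0. \<forall>u. 0 \<le> u \<and> u < s \<longrightarrow> R \<alpha> s0 u = \<alpha> u)"
    if "\<alpha> \<in> paths_from X m" for \<alpha> s0
    unfolding R_def
    by (rule someI[of _ \<alpha>]) (use that in \<open>auto intro!: exI[of _ "s0 + 1"]\<close>)
  have R_eq: "R \<alpha> s0 = R \<alpha>' s0" if agree: "\<forall>u. 0 \<le> u \<and> u < t \<longrightarrow> \<alpha> u = \<alpha>' u" and "s0 < t" for \<alpha> \<alpha>' s0 t
  proof -
    have "(\<exists>s>s0. \<forall>u. 0 \<le> u \<and> u < s \<longrightarrow> \<gamma> u = \<alpha> u) \<longleftrightarrow> (\<exists>s>s0. \<forall>u. 0 \<le> u \<and> u < s \<longrightarrow> \<gamma> u = \<alpha>' u)" for \<gamma>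
    proof
      assume "\<exists>s>s0. \<forall>u. 0 \<le> u \<and> u < s \<longrightarrow> \<gamma> u = \<alpha> u"
      then obtain s where "s > s0" "\<forall>u. 0 \<le> u \<and> u < s \<longrightarrow> \<gamma> u = \<alpha> u" by blast
      then show "\<exists>s>s0. \<forall>u. 0 \<le> u \<and> u < s \<longrightarrow> \<gamma> u = \<alpha>' u"
        using agree \<open>s0 < t\<close> by (intro exI[of _ "min s t"]) auto
    next
      assume "\<exists>s>s0. \<forall>u. 0 \<le> u \<and> u < s \<longrightarrow> \<gamma> u = \<alpha>' u"
      then obtain s where "s > s0" "\<forall>u. 0 \<le> u \<and> u < s \<longrightarrow> \<gamma> u = \<alpha>' u" by blast
      then show "\<exists>s>s0. \<forall>u. 0 \<le> u \<and> u < s \<longrightarrow> \<gamma> u = \<alpha> u"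
        using agree \<open>s0 < t\<close> by (intro exI[of _ "min s t"]) auto
    qed
    then show ?thesis unfolding R_def by simp
  qed
  have k0_eq: "k0 \<alpha>' = k0 \<alpha>"
    if agree: "\<forall>u. 0 \<le> u \<and> u < t \<longrightarrow> \<alpha> u = \<alpha>' u" and \<alpha>: "\<alpha> \<in> paths_from X m"
      and lt: "T (k0 \<alpha>) < t" for \<alpha> \<alpha>' t
  proof -
    have same: "hit \<alpha> j \<longleftrightarrow> hit \<alpha>' j" if "j \<le> k0 \<alpha>" for j
    proof -
      have "T j \<le> T (k0 \<alpha>)" using that by (rule Tmono)
      then have "\<alpha> (T j) = \<alpha>' (T j)" using agree lt Tge by auto
      then show ?thesis unfolding hit_def by simp
    qed
    show ?thesis unfolding k0_def
    proof (rule Least_equality)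
      show "hit \<alpha>' (LEAST k. hit \<alpha> k)" using same[of "k0 \<alpha>"] k0hit[OF \<alpha>] by (simp add: k0_def)
      fix j assume "hit \<alpha>' j"
      show "(LEAST k. hit \<alpha> k) \<le> j"
      proof (rule ccontr)
        assume "\<not> (LEAST k. hit \<alpha> k) \<le> j"
        then have "j < k0 \<alpha>" by (simp add: k0_def)
        then have "hit \<alpha> j" using same[of j] \<open>hit \<alpha>' j\<close> by simp
        then show False using \<open>j < k0 \<alpha>\<close> not_less_Least unfolding k0_def by blast
      qed
    qed
  qed
  define S where "S \<alpha> = (\<lambda>t. if t \<le> T (k0 \<alpha>) then tau (k0 \<alpha>) t else R \<alpha> (T (k0 \<alpha>)) t)" for \<alpha>
  have S_path: "S \<alpha> \<in> paths_from X l" if \<alpha>: "\<alpha> \<in> paths_from X m" for \<alpha>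
  proof -
    obtain s where s: "s > T (k0 \<alpha>)" "\<forall>u. 0 \<le> u \<and> u < s \<longrightarrow> R \<alpha> (T (k0 \<alpha>)) u = \<alpha> u"
      using R[OF \<alpha>] by blast
    have "R \<alpha> (T (k0 \<alpha>)) (T (k0 \<alpha>)) = \<alpha> (T (k0 \<alpha>))" using s Tge by auto
    then have mem: "R \<alpha> (T (k0 \<alpha>)) (T (k0 \<alpha>)) \<in> open_hull X {w (k0 \<alpha>)}"
      using k0hit[OF \<alpha>] unfolding hit_def by simp
    have "continuous_map (subtopology euclideanreal {0..}) X (S \<alpha>)"
      unfolding S_def
    proof (rule jump_cont[OF tau_cont])
      show "continuous_map (subtopology euclideanreal {0..}) X (R \<alpha> (T (k0 \<alpha>)))"
        using R[OF \<alpha>] by (simp add: paths_from_def)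
      show "T (k0 \<alpha>) \<ge> 0" by (rule Tge)
      fix V assume "openin X V" "tau (k0 \<alpha>) (T (k0 \<alpha>)) \<in> V"
      then show "R \<alpha> (T (k0 \<alpha>)) (T (k0 \<alpha>)) \<in> V" using OH_mem[OF mem] tau_T by simp
    qed
    moreover have "S \<alpha> 0 = l" using Tge tau_l by (simp add: S_def)
    ultimately show ?thesis by (simp add: paths_from_def)
  qed
  have S_catch: "\<exists>t\<ge>0. S \<alpha> t = \<alpha> t" if \<alpha>: "\<alpha> \<in> paths_from X m" for \<alpha>
  proof -
    obtain s where s: "s > T (k0 \<alpha>)" "\<forall>u. 0 \<le> u \<and> u < s \<longrightarrow> R \<alpha> (T (k0 \<alpha>)) u = \<alpha> u"
      using R[OF \<alpha>] by blast
    define t where "t = (T (k0 \<alpha>) + s) / 2"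
    have "t > T (k0 \<alpha>)" "t < s" "t \<ge> 0" using s Tge[of "k0 \<alpha>"] by (auto simp: t_def)
    then show ?thesis using s by (intro exI[of _ t]) (auto simp: S_def)
  qed
  have S_causal: "\<forall>s. 0 \<le> s \<and> s \<le> t \<longrightarrow> S \<alpha> s = S \<alpha>' s"
    if \<alpha>: "\<alpha> \<in> paths_from X m" and \<alpha>': "\<alpha>' \<in> paths_from X m"
      and agree: "\<forall>s. 0 \<le> s \<and> s < t \<longrightarrow> \<alpha> s = \<alpha>' s" for \<alpha> \<alpha>' t
  proof (cases "T (k0 \<alpha>) < t \<or> T (k0 \<alpha>') < t")
    case True
    have agree': "\<forall>s. 0 \<le> s \<and> s < t \<longrightarrow> \<alpha>' s = \<alpha> s" using agree by auto
    have keq: "k0 \<alpha>' = k0 \<alpha>"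
      using True k0_eq[OF agree \<alpha>] k0_eq[OF agree' \<alpha>'] by auto
    have "T (k0 \<alpha>) < t" using True keq by auto
    then have "R \<alpha> (T (k0 \<alpha>)) = R \<alpha>' (T (k0 \<alpha>))" using R_eq agree by blast
    then show ?thesis using keq by (simp add: S_def)
  next
    case False
    show ?thesis
    proof (intro allI impI)
      fix s assume s: "0 \<le> s \<and> s \<le> t"
      have s1: "s \<le> T (k0 \<alpha>)" "s \<le> T (k0 \<alpha>')" using False s by auto
      have "tau (k0 \<alpha>) s = tau (k0 \<alpha>') s"
      proof (cases "k0 \<alpha> \<le> k0 \<alpha>'")
        case True
        then show ?thesis using tau_agree[OF True s1(1)] by simp
      next
        case False
        then have le: "k0 \<alpha>' \<le> k0 \<alpha>" by simp
        show ?thesis using tau_agree[OF le s1(2)] by simp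
      qed
      then show "S \<alpha> s = S \<alpha>' s" using s1 by (simp add: S_def)
    qed
  qed
  have "lion_strategy X m l S"
    unfolding lion_strategy_def using S_path S_catch S_causal by blast
  then show ?thesis by blast
qed

lemma finite_case:
  assumes "finite (topspace Z)" "path_connected_space Z" "m' \<in> topspace Z" "l' \<in> topspace Z"
  shows "\<exists>S. lion_strategy Z m' l' S"
proof (rule main_lemma[of Z "topspace Z"])
  show "A_space Z" unfolding A_space_def
  proof (intro allI impI)
    fix F :: "'a set set" assume F: "F \<noteq> {} \<and> (\<forall>U\<in>F. openin Z U)"
    have "F \<subseteq> Pow (topspace Z)" using F openin_subset by auto
    then have "finite F" using assms(1) finite_subset by blast
    then show "openin Z (\<Inter>F)" using F by auto
  qed
  show "countable (topspace Z)" using assms(1) by (rule countable_finite)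
  show "open_hull Z (topspace Z) = topspace Z"
    unfolding open_hull_def using openin_subset by fastforce
qed (use assms in auto)

theorem mainTheorem5:
  fixes X :: "'a topology" and Y :: "'a set" and m l :: 'a
  assumes "path_connected_space X"
    and "A_space X"
    and "countable Y" and "Y \<subseteq> topspace X"
    and "open_hull X Y = topspace X"
    and "m \<in> topspace X" and "l \<in> topspace X"
  shows "(\<exists>S. lion_strategy X m l S) \<and>
         (\<forall>(Z :: 'a topology) m' l'. finite (topspace Z) \<and> path_connected_space Z \<and>
            m' \<in> topspace Z \<and> l' \<in> topspace Z \<longrightarrow> (\<exists>S. lion_strategy Z m' l' S))"
proof (intro conjI allI impI)
  show "\<exists>S. lion_strategy X m l S" by (rule main_lemma[OF assms])
next
  fix Z :: "'a topology" and m' l' :: 'a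
  assume H: "finite (topspace Z) \<and> path_connected_space Z \<and> m' \<in> topspace Z \<and> l' \<in> topspace Z"
  show "\<exists>S. lion_strategy Z m' l' S"
    using H by (intro finite_case) simp_all
qed

end
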